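(* For a length-$N$ steganographic code subject to distortion $D$ with zero probability of error (for any $\varepsilon>0$, $P(\phi_N(X^N,K)\ne M)\le\varepsilon$), the unicity distance $n_0$ for known-cover extracting attack and the unicity distance $n_1$ for stego-only extracting attack satisfy, for any given $\varepsilon>0$, \[ n_1\ \ge\ n_0\ \ge\ \frac{R_k}{C(D)-R_m+\varepsilon}, \] where $C(D)=\max_{q(x|\widetilde{x})\in Q}H(X|\widetilde{X})$ is the hiding capacity, $R_m=H(M)/N$ is the message rate and $R_k=H(K)/N$ is the key rate.
   Context: Model. $\mathcal{X}$ is a finite alphabet, $\mathcal{K}$ a finite key set. A distortion function is $d:\mathcal{X}\times\mathcal{X}\to[0,\infty)$, extended to $N$-tuples by averaging. A length-$N$ steganographic code subject to distortion $D$ is a triple $(\mathcal{M},f_N,\phi_N)$ with finite message set $\mathcal{M}$, embedding map $f_N:\mathcal{X}^N\times\mathcal{M}\times\mathcal{K}\to\mathcal{X}^N$ whose average distortion (averaged over cover distribution, uniform message and uniform key) is at most $D$, and extraction map $\phi_N(x^N,k)\in\mathcal{M}$. The cover $\widetilde{X}^N$ is i.i.d. from $P(\widetilde{x})$; the message $M$ is uniform and independent of the cover; the key $K$ is independent of message and cover; $X^N=f_N(\widetilde{X}^N,M,K)$. Admissible cover channels: $Q=\{q(x|\widetilde{x}):\sum_{\widetilde{x},x}d(\widetilde{x},x)q(x|\widetilde{x})P(\widetilde{x})\le D\}$, acting memorylessly on $N$-tuples. In an $n$-fold use, $n$ i.i.d. covers and messages are embedded with the same key. Given $n$ observed pairs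 of cover/stego objects, a key $k$ is possible if there is a message sequence of positive probability which, embedded with $k$ into the observed covers, yields the observed stego objects; the expected number of spurious keys $\overline{S}_n$ is the expectation of (number of possible keys $-1$). The unicity distance $n_0$ (known-cover attack) is the minimum number of cover/stego pairs with which the expected number of spurious stego keys equals zero; the unicity distance $n_1$ (stego-only attack) is the minimum number of stego objects with which the expected number of spurious stego keys equals zero (where possible keys are those consistent with the stego objects alone). Entropies are in bits. *)

theory Defs
  imports Complex_Main
begin

(* Entropy (in bits) of a finitely supported distribution p on the finite set A,
   with the convention 0 log 0 = 0 (automatic, since 0 * _ = 0). *)
definition entropy :: "('a \<Rightarrow> real) \<Rightarrow> 'a set \<Rightarrow> real" where
  "entropy p A = - (\<Sum>a\<in>A. p a * log 2 (p a))"

definition unif :: "'a::finite \<Rightarrow> real" where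
  "unif (a::'a::finite) = 1 / real (card (UNIV :: 'a set))"

definition tuples :: "nat \<Rightarrow> 'a list set" where
  "tuples N = {xs. length xs = N}"

definition prodP :: "('x \<Rightarrow> real) \<Rightarrow> 'x list \<Rightarrow> real" where
  "prodP P xs = prod_list (map P xs)"

definition distN :: "('x \<Rightarrow> 'x \<Rightarrow> real) \<Rightarrow> 'x list \<Rightarrow> 'x list \<Rightarrow> real" where
  "distN d xs ys = (\<Sum>i<length xs. d (xs ! i) (ys ! i)) / real (length xs)"

definition avg_distortion ::
  "nat \<Rightarrow> ('x::finite \<Rightarrow> real) \<Rightarrow> ('x \<Rightarrow> 'x \<Rightarrow> real) \<Rightarrow>
   ('x list \<Rightarrow> 'm::finite \<Rightarrow> 'k::finite \<Rightarrow> 'x list) \<Rightarrow> real" where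
  "avg_distortion N P d f =
     (\<Sum>c\<in>tuples N. \<Sum>m\<in>UNIV. \<Sum>k\<in>UNIV.
        prodP P c * unif m * unif k * distN d c (f c m k))"

definition err_prob ::
  "nat \<Rightarrow> ('x::finite \<Rightarrow> real) \<Rightarrow>
   ('x list \<Rightarrow> 'm::finite \<Rightarrow> 'k::finite \<Rightarrow> 'x list) \<Rightarrow> ('x list \<Rightarrow> 'k \<Rightarrow> 'm) \<Rightarrow> real" where
  "err_prob N P f phi =
     (\<Sum>c\<in>tuples N. \<Sum>m\<in>UNIV. \<Sum>k\<in>UNIV.
        prodP P c * unif m * unif k * (if phi (f c m k) k \<noteq> m then 1 else 0))"

definition stego_code ::
  "nat \<Rightarrow> ('x::finite \<Rightarrow> real) \<Rightarrow> ('x \<Rightarrow> 'x \<Rightarrow> real) \<Rightarrow> real \<Rightarrow>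
   ('x list \<Rightarrow> 'm::finite \<Rightarrow> 'k::finite \<Rightarrow> 'x list) \<Rightarrow> ('x list \<Rightarrow> 'k \<Rightarrow> 'm) \<Rightarrow> bool" where
  "stego_code N P d D f phi \<longleftrightarrow>
     (\<forall>c m k. length c = N \<longrightarrow> length (f c m k) = N) \<and>
     avg_distortion N P d f \<le> D"

(* admissible cover channels q(x | xt) = q xt x *)
definition admissible :: "('x::finite \<Rightarrow> real) \<Rightarrow> ('x \<Rightarrow> 'x \<Rightarrow> real) \<Rightarrow> real \<Rightarrow> ('x \<Rightarrow> 'x \<Rightarrow> real) set" where
  "admissible P d D =
     {q. (\<forall>xt x. 0 \<le> q xt x) \<and> (\<forall>xt. (\<Sum>x\<in>UNIV. q xt x) = 1) \<and>
         (\<Sum>xt\<in>UNIV. \<Sum>x\<in>UNIV. d xt x * q xt x * P xt) \<le> D}"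

definition cond_entropy :: "('x::finite \<Rightarrow> real) \<Rightarrow> ('x \<Rightarrow> 'x \<Rightarrow> real) \<Rightarrow> real" where
  "cond_entropy P q = - (\<Sum>xt\<in>UNIV. \<Sum>x\<in>UNIV. P xt * q xt x * log 2 (q xt x))"

definition hiding_capacity :: "('x::finite \<Rightarrow> real) \<Rightarrow> ('x \<Rightarrow> 'x \<Rightarrow> real) \<Rightarrow> real \<Rightarrow> real" where
  "hiding_capacity P d D = (SUP q\<in>admissible P d D. cond_entropy P q)"

definition stegos :: "('x list \<Rightarrow> 'm \<Rightarrow> 'k \<Rightarrow> 'x list) \<Rightarrow> 'x list list \<Rightarrow> 'm list \<Rightarrow> 'k \<Rightarrow> 'x list list" where
  "stegos f cs ms k = map2 (\<lambda>c m. f c m k) cs ms"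

(* possible keys, known-cover attack: some message sequence (all have positive
   probability, messages being uniform) embedded with k' into the observed covers
   gives the observed stego objects *)
definition poss_keys_kc ::
  "('x list \<Rightarrow> 'm \<Rightarrow> 'k \<Rightarrow> 'x list) \<Rightarrow> 'x list list \<Rightarrow> 'x list list \<Rightarrow> 'k set" where
  "poss_keys_kc f cs ss =
     {k'. \<exists>ms'. length ms' = length cs \<and> stegos f cs ms' k' = ss}"

definition poss_keys_so ::
  "nat \<Rightarrow> ('x \<Rightarrow> real) \<Rightarrow> ('x list \<Rightarrow> 'm \<Rightarrow> 'k \<Rightarrow> 'x list) \<Rightarrow> 'x list list \<Rightarrow> 'k set" where
  "poss_keys_so N P f ss =
     {k'. \<exists>cs' ms'. length cs' = length ss \<and> length ms' = length ss \<and>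
          (\<forall>c\<in>set cs'. length c = N \<and> prodP P c > 0) \<and> stegos f cs' ms' k' = ss}"

definition spurious_kc ::
  "nat \<Rightarrow> ('x::finite \<Rightarrow> real) \<Rightarrow> ('x list \<Rightarrow> 'm::finite \<Rightarrow> 'k::finite \<Rightarrow> 'x list) \<Rightarrow> nat \<Rightarrow> real" where
  "spurious_kc N P f n =
     (\<Sum>cs\<in>{cs. length cs = n \<and> (\<forall>c\<in>set cs. c \<in> tuples N)}.
      \<Sum>ms\<in>{ms::'m list. length ms = n}. \<Sum>k\<in>UNIV.
        prod_list (map (prodP P) cs) * prod_list (map unif ms) * unif k *
        (real (card (poss_keys_kc f cs (stegos f cs ms k))) - 1))"

definition spurious_so ::
  "nat \<Rightarrow> ('x::finite \<Rightarrow> real) \<Rightarrow> ('x list \<Rightarrow> 'm::finite \<Rightarrow> 'k::finite \<Rightarrow> 'x list) \<Rightarrow> nat \<Rightarrow> real" where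
  "spurious_so N P f n =
     (\<Sum>cs\<in>{cs. length cs = n \<and> (\<forall>c\<in>set cs. c \<in> tuples N)}.
      \<Sum>ms\<in>{ms::'m list. length ms = n}. \<Sum>k\<in>UNIV.
        prod_list (map (prodP P) cs) * prod_list (map unif ms) * unif k *
        (real (card (poss_keys_so N P f (stegos f cs ms k))) - 1))"

definition unicity_kc :: "nat \<Rightarrow> ('x::finite \<Rightarrow> real) \<Rightarrow> ('x list \<Rightarrow> 'm::finite \<Rightarrow> 'k::finite \<Rightarrow> 'x list) \<Rightarrow> nat" where
  "unicity_kc N P f = (LEAST n. spurious_kc N P f n = 0)"

definition unicity_so :: "nat \<Rightarrow> ('x::finite \<Rightarrow> real) \<Rightarrow> ('x list \<Rightarrow> 'm::finite \<Rightarrow> 'k::finite \<Rightarrow> 'x list) \<Rightarrow> nat" where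
  "unicity_so N P f = (LEAST n. spurious_so N P f n = 0)"

end

theory Submission
  imports Defs
begin


lemma prod_list_idx: "prod_list (map p xs) = (\<Prod>i<length xs. p (xs ! i))"
  by (induction xs) (simp_all add: prod.lessThan_Suc_shift del: prod.lessThan_Suc)

lemma sum_prod_idx:
  fixes F :: "nat \<Rightarrow> 'a \<Rightarrow> real"
  assumes "\<And>i. finite (S i)"
  shows "finite {ys. length ys = n \<and> (\<forall>i<n. ys ! i \<in> S i)} \<and>
     (\<Sum>ys\<in>{ys. length ys = n \<and> (\<forall>i<n. ys ! i \<in> S i)}. \<Prod>i<n. F i (ys ! i))
       = (\<Prod>i<n. \<Sum>y\<in>S i. F i y)"
  using assms
proof (induction n arbitrary: S F)
  case 0
  have "{ys::'a list. length ys = 0 \<and> (\<forall>i<0. ys ! i \<in> S i)} = {[]}" by auto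
  then show ?case by simp
next
  case (Suc n)
  let ?T = "{ys. length ys = n \<and> (\<forall>i<n. ys ! i \<in> S (Suc i))}"
  have eq: "{ys. length ys = Suc n \<and> (\<forall>i<Suc n. ys ! i \<in> S i)} = (\<lambda>(y,ys). y # ys) ` (S 0 \<times> ?T)"
  proof (rule set_eqI, rule iffI)
    fix ys assume "ys \<in> {ys. length ys = Suc n \<and> (\<forall>i<Suc n. ys ! i \<in> S i)}"
    then show "ys \<in> (\<lambda>(y,ys). y # ys) ` (S 0 \<times> ?T)"
      by (cases ys) (auto simp: image_iff)
  next
    fix ys assume "ys \<in> (\<lambda>(y,ys). y # ys) ` (S 0 \<times> ?T)"
    then show "ys \<in> {ys. length ys = Suc n \<and> (\<forall>i<Suc n. ys ! i \<in> S i)}"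
      by (auto simp: less_Suc_eq_0_disj)
  qed
  have inj: "inj_on (\<lambda>(y,ys). y # ys) (S 0 \<times> ?T)" by (auto simp: inj_on_def)
  have IH: "finite ?T \<and> (\<Sum>ys\<in>?T. \<Prod>i<n. F (Suc i) (ys ! i)) = (\<Prod>i<n. \<Sum>y\<in>S (Suc i). F (Suc i) y)"
    using Suc.IH[of "\<lambda>i. S (Suc i)" "\<lambda>i. F (Suc i)"] Suc.prems by blast
  have "(\<Sum>ys\<in>(\<lambda>(y,ys). y # ys) ` (S 0 \<times> ?T). \<Prod>i<Suc n. F i (ys ! i))
      = (\<Sum>(y,ys)\<in>S 0 \<times> ?T. F 0 y * (\<Prod>i<n. F (Suc i) (ys ! i)))"
    by (subst sum.reindex[OF inj]) (simp add: prod.lessThan_Suc_shift case_prod_unfold del: prod.lessThan_Suc)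
  also have "\<dots> = (\<Sum>y\<in>S 0. F 0 y) * (\<Sum>ys\<in>?T. \<Prod>i<n. F (Suc i) (ys ! i))"
    by (simp add: sum_product sum.cartesian_product)
  finally have "(\<Sum>ys\<in>{ys. length ys = Suc n \<and> (\<forall>i<Suc n. ys ! i \<in> S i)}. \<Prod>i<Suc n. F i (ys ! i))
     = (\<Prod>i<Suc n. \<Sum>y\<in>S i. F i y)" using IH eq
    by (simp add: prod.lessThan_Suc_shift del: prod.lessThan_Suc)
  moreover have "finite {ys. length ys = Suc n \<and> (\<forall>i<Suc n. ys ! i \<in> S i)}"
    unfolding eq using IH Suc.prems by blast
  ultimately show ?case by blast
qed

lemma list_sum_one:
  fixes p :: "'a \<Rightarrow> real"
  assumes "finite S" "(\<Sum>x\<in>S. p x) = 1"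
  shows "(\<Sum>xs\<in>{xs. length xs = n \<and> set xs \<subseteq> S}. prod_list (map p xs)) = 1"
proof -
  have e: "{xs. length xs = n \<and> set xs \<subseteq> S} = {ys. length ys = n \<and> (\<forall>i<n. ys ! i \<in> S)}"
    by (auto simp: set_conv_nth)
  show ?thesis unfolding e prod_list_idx
    using sum_prod_idx[of "\<lambda>_. S" n "\<lambda>_. p"] assms
    by (auto intro!: sum.cong)
qed

lemma list_marg:
  fixes p :: "'a \<Rightarrow> real"
  assumes "finite S" "(\<Sum>x\<in>S. p x) = 1" "i0 < n"
  shows "(\<Sum>xs\<in>{xs. length xs = n \<and> set xs \<subseteq> S}. prod_list (map p xs) * h (xs ! i0))
     = (\<Sum>x\<in>S. p x * h x)"
proof -
  have e: "{xs. length xs = n \<and> set xs \<subseteq> S} = {ys. length ys = n \<and> (\<forall>i<n. ys ! i \<in> S)}"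
    by (auto simp: set_conv_nth)
  define F where "F = (\<lambda>i x. p x * (if i = i0 then h x else 1))"
  have 1: "prod_list (map p xs) * h (xs ! i0) = (\<Prod>i<n. F i (xs ! i))" if "length xs = n" for xs
  proof -
    have "(\<Prod>i<n. F i (xs ! i)) = (\<Prod>i<n. p (xs ! i)) * (\<Prod>i<n. (if i = i0 then h (xs ! i) else 1))"
      by (simp add: F_def prod.distrib)
    also have "(\<Prod>i<n. (if i = i0 then h (xs ! i) else 1)) = h (xs ! i0)"
      using assms(3) by (simp add: prod.delta)
    finally show ?thesis using that by (simp add: prod_list_idx)
  qed
  have 2: "(\<Prod>i<n. \<Sum>y\<in>S. F i y) = (\<Sum>x\<in>S. p x * h x)"
  proof -
    have "(\<Prod>i<n. \<Sum>y\<in>S. F i y) = (\<Prod>i<n. if i = i0 then (\<Sum>x\<in>S. p x * h x) else 1)"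
      by (rule prod.cong) (auto simp: F_def assms(2))
    also have "\<dots> = (\<Sum>x\<in>S. p x * h x)" using assms(3) by (simp add: prod.delta)
    finally show ?thesis .
  qed
  show ?thesis unfolding e
    using sum_prod_idx[of "\<lambda>_. S" n F] assms 1 2
    by (auto intro!: sum.cong)
qed

lemma delta2: "(\<Sum>xt\<in>(UNIV::'x::finite set). \<Sum>x\<in>(UNIV::'y::finite set). G xt x * (if a = xt \<and> b = x then 1 else 0)) = (G a b :: real)"
proof -
  have "(\<Sum>xt\<in>(UNIV::'x::finite set). \<Sum>x\<in>(UNIV::'y::finite set). G xt x * (if a = xt \<and> b = x then 1 else 0))
     = (\<Sum>xt\<in>(UNIV::'x::finite set). if a = xt then G xt b else 0)"
    by (rule sum.cong) (auto simp: sum.delta if_distrib cong: if_cong)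
  also have "\<dots> = G a b" by (simp add: sum.delta)
  finally show ?thesis .
qed
lemma swapL: "(\<Sum>a\<in>A. \<Sum>b\<in>B. (G a b::real) * sum (\<lambda>z. T z a b) Z) = (\<Sum>z\<in>Z. \<Sum>a\<in>A. \<Sum>b\<in>B. G a b * T z a b)"
proof -
  have "(\<Sum>a\<in>A. \<Sum>b\<in>B. (G a b::real) * sum (\<lambda>z. T z a b) Z) = (\<Sum>a\<in>A. \<Sum>z\<in>Z. \<Sum>b\<in>B. G a b * T z a b)"
    by (rule sum.cong[OF refl]) (simp add: sum_distrib_left sum.swap[of _ B])
  also have "\<dots> = (\<Sum>z\<in>Z. \<Sum>a\<in>A. \<Sum>b\<in>B. G a b * T z a b)" by (rule sum.swap)
  finally show ?thesis .
qed

lemma unif_sum: "(\<Sum>m\<in>(UNIV::'a::finite set). unif m) = 1" by (simp add: unif_def)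
lemma unif_pos: "unif (m::'a::finite) > 0" by (simp add: unif_def card_gt_0_iff)
lemma tuples_eq: "tuples N = {xs. length xs = N \<and> set xs \<subseteq> UNIV}" by (simp add: tuples_def)
lemma finite_tuples: "finite (tuples N :: 'x::finite list set)"
  using finite_lists_length_eq[of "UNIV::'x set" N] by (simp add: tuples_def)
lemma prodP_nonneg: "\<forall>x. 0 \<le> P x \<Longrightarrow> 0 \<le> prodP P c"
  by (simp add: prodP_def prod_list_idx prod_nonneg)
lemma prodP_pos_nth: "\<forall>x. 0 \<le> P x \<Longrightarrow> prodP P c > 0 \<Longrightarrow> i < length c \<Longrightarrow> P (c ! i) > 0"
proof -
  assume a: "\<forall>x. 0 \<le> P x" "prodP P c > 0" "i < length c"
  then have "prod_list (map P c) \<noteq> 0" by (simp add: prodP_def)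
  then have "0 \<notin> set (map P c)" by (simp only: prod_list_zero_iff) simp
  then have "P (c ! i) \<noteq> 0" using a(3) by (metis length_map nth_map nth_mem)
  with a(1) show ?thesis by (metis less_eq_real_def)
qed

definition wgt :: "('x \<Rightarrow> real) \<Rightarrow> 'x list \<Rightarrow> 'm::finite \<Rightarrow> 'k::finite \<Rightarrow> real" where
  "wgt P c m k = prodP P c * unif m * unif k"

definition Aj :: "nat \<Rightarrow> ('x::finite \<Rightarrow> real) \<Rightarrow> ('x list \<Rightarrow> 'm::finite \<Rightarrow> 'k::finite \<Rightarrow> 'x list) \<Rightarrow> 'x \<Rightarrow> 'x \<Rightarrow> real" where
  "Aj N P f xt x = (\<Sum>c\<in>tuples N. \<Sum>m\<in>UNIV. \<Sum>k\<in>UNIV. \<Sum>j<N.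
      wgt P c m k * (if c ! j = xt \<and> f c m k ! j = x then 1 else 0)) / real N"

definition qb :: "nat \<Rightarrow> ('x::finite \<Rightarrow> real) \<Rightarrow> ('x list \<Rightarrow> 'm::finite \<Rightarrow> 'k::finite \<Rightarrow> 'x list) \<Rightarrow> 'x \<Rightarrow> 'x \<Rightarrow> real" where
  "qb N P f xt x = (if P xt > 0 then Aj N P f xt x / P xt else 1 / real (card (UNIV::'x set)))"

lemma A_expect:
  fixes f :: "'x::finite list \<Rightarrow> 'm::finite \<Rightarrow> 'k::finite \<Rightarrow> 'x list" and G :: "'x \<Rightarrow> 'x \<Rightarrow> real"
  shows
  "(\<Sum>xt\<in>UNIV. \<Sum>x\<in>UNIV. G xt x * Aj N P f xt x) =
   (\<Sum>c\<in>tuples N. \<Sum>m\<in>UNIV. \<Sum>k\<in>UNIV. \<Sum>j<N. wgt P c m k * G (c ! j) (f c m k ! j)) / real N"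
proof -
  have "(\<Sum>xt\<in>UNIV. \<Sum>x\<in>UNIV. G xt x * Aj N P f xt x) =
    (\<Sum>xt\<in>UNIV. \<Sum>x\<in>UNIV. G xt x * (\<Sum>c\<in>tuples N. \<Sum>m\<in>UNIV. \<Sum>k\<in>UNIV. \<Sum>j<N.
      wgt P c m k * (if c ! j = xt \<and> f c m k ! j = x then 1 else 0))) / real N"
    unfolding Aj_def by (simp only: times_divide_eq_right sum_divide_distrib[symmetric])
  also have "(\<Sum>xt\<in>UNIV. \<Sum>x\<in>UNIV. G xt x * (\<Sum>c\<in>tuples N. \<Sum>m\<in>UNIV. \<Sum>k\<in>UNIV. \<Sum>j<N.
      wgt P c m k * (if c ! j = xt \<and> f c m k ! j = x then 1 else 0)))
    = (\<Sum>c\<in>tuples N. \<Sum>m\<in>UNIV. \<Sum>k\<in>UNIV. \<Sum>j<N. \<Sum>xt\<in>UNIV. \<Sum>x\<in>UNIV. G xt x *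
      (wgt P c m k * (if c ! j = xt \<and> f c m k ! j = x then 1 else 0)))"
    by (simp only: swapL)
  also have "\<dots> = (\<Sum>c\<in>tuples N. \<Sum>m\<in>UNIV. \<Sum>k\<in>UNIV. \<Sum>j<N. wgt P c m k * G (c ! j) (f c m k ! j))"
  proof -
    have "(\<Sum>xt\<in>UNIV. \<Sum>x\<in>UNIV. G xt x * (w * (if a = xt \<and> b = x then 1 else 0))) = w * G a b"
      for w :: real and a b :: 'x
      using delta2[of "\<lambda>xt x. w * G xt x" a b] by (simp add: ac_simps)
    then show ?thesis by simp
  qed
  finally show ?thesis .
qed


context
  fixes N :: nat and P :: "'x::finite \<Rightarrow> real" and f :: "'x list \<Rightarrow> 'm::finite \<Rightarrow> 'k::finite \<Rightarrow> 'x list"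
  assumes Npos: "N > 0" and Pnn: "\<forall>x. 0 \<le> P x" and Psum: "(\<Sum>x\<in>UNIV. P x) = 1"
    and flen: "\<forall>c m k. length c = N \<longrightarrow> length (f c m k) = N"
begin

lemma prodP_sum: "(\<Sum>c\<in>tuples N. prodP P c) = 1"
  unfolding tuples_eq prodP_def using list_sum_one[of UNIV P N] Psum by simp

lemma prodP_marg: "j < N \<Longrightarrow> (\<Sum>c\<in>tuples N. prodP P c * h (c ! j)) = (\<Sum>x\<in>UNIV. P x * h x)"
  unfolding tuples_eq prodP_def using list_marg[of UNIV P j N h] Psum by simp

lemma wgt_mk: "(\<Sum>m\<in>UNIV. \<Sum>k\<in>UNIV. wgt P c (m::'m) (k::'k) * X) = prodP P c * X"
proof -
  have "(\<Sum>m\<in>UNIV. \<Sum>k\<in>UNIV. wgt P c (m::'m) (k::'k) * X)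
      = prodP P c * X * ((\<Sum>m\<in>UNIV. unif (m::'m)) * (\<Sum>k\<in>UNIV. unif (k::'k)))"
    by (simp add: wgt_def sum_distrib_left sum_distrib_right sum_product ac_simps)
  then show ?thesis by (simp add: unif_sum)
qed

lemma wgt_nonneg: "0 \<le> wgt P c m k"
  unfolding wgt_def using prodP_nonneg[OF Pnn] unif_pos[of m] unif_pos[of k] by simp

lemma A_nonneg: "0 \<le> Aj N P f xt x"
  unfolding Aj_def by (intro divide_nonneg_nonneg sum_nonneg mult_nonneg_nonneg wgt_nonneg) auto

lemma A_marg: "(\<Sum>x\<in>UNIV. Aj N P f xt0 x) = P xt0"
proof -
  define G where "G = (\<lambda>(a::'x) (b::'x). if a = xt0 then (1::real) else 0)"
  have "(\<Sum>xt\<in>UNIV. \<Sum>x\<in>UNIV. G xt x * Aj N P f xt x) = (\<Sum>xt\<in>UNIV. if xt = xt0 then (\<Sum>x\<in>UNIV. Aj N P f xt x) else 0)"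
    by (rule sum.cong) (auto simp: G_def)
  also have "\<dots> = (\<Sum>x\<in>UNIV. Aj N P f xt0 x)" by (simp add: sum.delta)
  finally have L: "(\<Sum>xt\<in>UNIV. \<Sum>x\<in>UNIV. G xt x * Aj N P f xt x) = (\<Sum>x\<in>UNIV. Aj N P f xt0 x)" .
  have "(\<Sum>c\<in>tuples N. \<Sum>m\<in>UNIV. \<Sum>k\<in>UNIV. \<Sum>j<N. wgt P c m k * G (c ! j) (f c m k ! j))
     = (\<Sum>c\<in>tuples N. \<Sum>m\<in>UNIV. \<Sum>k\<in>UNIV. wgt P c m k * (\<Sum>j<N. G (c ! j) (f c m k ! j)))"
    by (simp add: sum_distrib_left)
  also have "\<dots> = (\<Sum>c\<in>tuples N. prodP P c * (\<Sum>j<N. if c ! j = xt0 then 1 else 0))"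
    by (simp add: G_def wgt_mk)
  also have "\<dots> = (\<Sum>j<N. \<Sum>c\<in>tuples N. prodP P c * (if c ! j = xt0 then 1 else 0))"
    by (simp add: sum_distrib_left sum.swap[of _ "tuples N"])
  also have "\<dots> = (\<Sum>j<N. \<Sum>x\<in>UNIV. P x * (if x = xt0 then 1 else 0))"
    by (rule sum.cong[OF refl], rule prodP_marg) simp
  also have "\<dots> = real N * P xt0"
    by (simp add: if_distrib[of "\<lambda>t. P _ * t"] sum.delta cong: if_cong)
  finally show ?thesis using A_expect[of G N P f] L Npos by simp
qed

lemma A_zero: "P xt = 0 \<Longrightarrow> Aj N P f xt x = 0"
  using A_marg[of xt] A_nonneg sum_nonneg_eq_0_iff[of UNIV "Aj N P f xt"] by auto

lemma A_eq: "Aj N P f xt x = P xt * qb N P f xt x"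
  using A_zero[of xt x] Pnn by (auto simp: qb_def less_eq_real_def)

lemma qb_nonneg: "0 \<le> qb N P f xt x"
  unfolding qb_def using A_nonneg by auto

lemma qb_sum: "(\<Sum>x\<in>UNIV. qb N P f xt x) = 1"
proof (cases "P xt > 0")
  case True
  then show ?thesis by (simp add: qb_def sum_divide_distrib[symmetric] A_marg)
next
  case False
  then show ?thesis by (simp add: qb_def card_gt_0_iff)
qed

lemma qb_pos:
  assumes c: "c \<in> tuples N" and pc: "prodP P c > 0" and j: "j < N"
  shows "qb N P f (c ! j) (f c m k ! j) > 0"
proof -
  have lc: "length c = N" using c by (simp add: tuples_def)
  have Ppos: "P (c ! j) > 0" using prodP_pos_nth[OF Pnn pc] lc j by simp
  have w: "wgt P c m k > 0" unfolding wgt_def using pc unif_pos[of m] unif_pos[of k] by simp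
  let ?T = "\<lambda>c m k j. wgt P c m k * (if c ! j = c ! j \<and> f c m k ! j = f c m k ! j then 1 else 0)"
  have "0 < (\<Sum>c'\<in>tuples N. \<Sum>m'\<in>UNIV. \<Sum>k'\<in>UNIV. \<Sum>j'<N.
      wgt P c' m' k' * (if c' ! j' = c ! j \<and> f c' m' k' ! j' = f c m k ! j then 1 else 0))"
    apply (rule sum_pos2[OF finite_tuples c])
     apply (rule sum_pos2[of _ m], simp, simp)
      apply (rule sum_pos2[of _ k], simp, simp)
       apply (rule sum_pos2[of _ j], simp, simp add: j)
    using w apply simp
    by (auto intro!: sum_nonneg mult_nonneg_nonneg wgt_nonneg)
  then have "Aj N P f (c ! j) (f c m k ! j) > 0" unfolding Aj_def using Npos by simp
  then show ?thesis using Ppos by (simp add: qb_def)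
qed


lemma qb_adm:
  assumes "avg_distortion N P d f \<le> D"
  shows "qb N P f \<in> admissible P d D"
proof -
  have "(\<Sum>xt\<in>UNIV. \<Sum>x\<in>UNIV. d xt x * qb N P f xt x * P xt) = (\<Sum>xt\<in>UNIV. \<Sum>x\<in>UNIV. d xt x * Aj N P f xt x)"
    by (simp add: A_eq ac_simps)
  also have "\<dots> = (\<Sum>c\<in>tuples N. \<Sum>m\<in>UNIV. \<Sum>k\<in>UNIV. \<Sum>j<N. wgt P c m k * d (c ! j) (f c m k ! j)) / real N"
    by (rule A_expect)
  also have "\<dots> = avg_distortion N P d f"
    unfolding avg_distortion_def sum_divide_distrib
    by (intro sum.cong refl) (auto simp: tuples_def distN_def wgt_def sum_distrib_left sum_divide_distrib)
  finally show ?thesis using assms qb_nonneg qb_sum unfolding admissible_def by auto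
qed

lemma H_expect:
  "(\<Sum>c\<in>tuples N. \<Sum>m\<in>UNIV. \<Sum>k\<in>UNIV. \<Sum>j<N. wgt P c m k * ln (qb N P f (c ! j) (f c m k ! j)))
     = - real N * ln 2 * cond_entropy P (qb N P f)"
proof -
  have "(\<Sum>c\<in>tuples N. \<Sum>m\<in>UNIV. \<Sum>k\<in>UNIV. \<Sum>j<N. wgt P c m k * ln (qb N P f (c ! j) (f c m k ! j)))
     = real N * (\<Sum>xt\<in>UNIV. \<Sum>x\<in>UNIV. ln (qb N P f xt x) * Aj N P f xt x)"
    using A_expect[of "\<lambda>a b. ln (qb N P f a b)" N P f] Npos by simp
  also have "(\<Sum>xt\<in>UNIV. \<Sum>x\<in>UNIV. ln (qb N P f xt x) * Aj N P f xt x)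
      = ln 2 * (\<Sum>xt\<in>UNIV. \<Sum>x\<in>UNIV. P xt * qb N P f xt x * log 2 (qb N P f xt x))"
    by (simp add: A_eq log_def sum_distrib_left ac_simps)
  finally show ?thesis by (simp add: cond_entropy_def)
qed

lemma stegos_nth: "length cs = n \<Longrightarrow> length ms = n \<Longrightarrow> i < n \<Longrightarrow> stegos f cs ms k ! i = f (cs ! i) (ms ! i) k"
  by (simp add: stegos_def)

lemma stegos_len: "length cs = n \<Longrightarrow> length ms = n \<Longrightarrow> length (stegos f cs ms k) = n"
  by (simp add: stegos_def)

lemma per_cs:
  fixes n :: nat and cs :: "'x list list"
  assumes csl: "length cs = n" and cst: "\<forall>c\<in>set cs. c \<in> tuples N" and pc: "\<forall>c\<in>set cs. prodP P c > 0"
   and inj: "inj_on (\<lambda>(ms,k). stegos f cs ms k) ({ms::'m list. length ms = n} \<times> (UNIV::'k set))"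
  shows "(\<Sum>ms\<in>{ms::'m list. length ms = n}. \<Sum>k\<in>(UNIV::'k set). prod_list (map unif ms) * unif k *
           (ln (real (card (UNIV::'m set)) ^ n * real (card (UNIV::'k set)))
             + (\<Sum>i<n. \<Sum>j<N. ln (qb N P f (cs!i!j) (f (cs!i) (ms!i) k ! j))))) \<le> 0"
proof -
  define MS where "MS = {ms::'m list. length ms = n}"
  define Z where "Z = MS \<times> (UNIV::'k set)"
  define W where "W = real (card (UNIV::'m set)) ^ n * real (card (UNIV::'k set))"
  define g where "g = (\<lambda>(ms,k). stegos f cs ms k)"
  define r where "r = (\<lambda>ys. \<Prod>i<n. \<Prod>j<N. qb N P f (cs!i!j) (ys!i!j))"
  define L where "L = (\<lambda>(ms,k). \<Sum>i<n. \<Sum>j<N. ln (qb N P f (cs!i!j) (f (cs!i) (ms!i) (k::'k) ! j)))"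
  have MSe: "MS = {xs. set xs \<subseteq> UNIV \<and> length xs = n}" by (simp add: MS_def)
  have finMS: "finite MS" unfolding MSe by (rule finite_lists_length_eq) simp
  have finZ: "finite Z" unfolding Z_def using finMS by simp
  have cardZ: "real (card Z) = W" unfolding Z_def W_def card_cartesian_product MSe card_lists_length_eq[OF finite_UNIV]
    by simp
  have Wpos: "W > 0" unfolding W_def by (simp add: card_gt_0_iff)
  have csi: "cs ! i \<in> tuples N" "prodP P (cs ! i) > 0" if "i < n" for i
    using cst pc that csl by auto
  have pm: "prod_list (map unif ms) * unif k = 1 / W" if "ms \<in> MS" for ms and k :: 'k
  proof -
    have "map unif ms = replicate n (1 / real (card (UNIV::'m set)))"
    proof -
      have "map unif ms = map (\<lambda>_. 1 / real (card (UNIV::'m set))) ms"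
        by (simp add: unif_def[abs_def])
      then show ?thesis using that by (simp add: MS_def map_replicate_const)
    qed
    then show ?thesis by (simp add: W_def unif_def prod_list_replicate power_one_over)
  qed
  have rpos: "r (g z) > 0" and lnr: "ln (r (g z)) = L z" if "z \<in> Z" for z
  proof -
    obtain ms k where z: "z = (ms, k)" and ms: "length ms = n" using \<open>z \<in> Z\<close> by (auto simp: Z_def MS_def)
    have q: "qb N P f (cs!i!j) (g z ! i ! j) > 0" if "i < n" "j < N" for i j
      using qb_pos[OF csi[OF that(1)] that(2)] stegos_nth[OF csl ms that(1)] by (simp add: z g_def)
    show "r (g z) > 0" unfolding r_def using q by (auto intro!: prod_pos)
    have "ln (r (g z)) = (\<Sum>i<n. \<Sum>j<N. ln (qb N P f (cs!i!j) (g z ! i ! j)))"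
    proof -
      have h1: "(\<Prod>j<N. qb N P f (cs ! i ! j) (g z ! i ! j)) \<noteq> 0" if "i < n" for i
      proof -
        have "(\<Prod>j<N. qb N P f (cs ! i ! j) (g z ! i ! j)) > 0" using q that by (intro prod_pos) auto
        then show ?thesis by (metis order_less_irrefl)
      qed
      have h2: "ln (\<Prod>j<N. qb N P f (cs ! i ! j) (g z ! i ! j)) = (\<Sum>j<N. ln (qb N P f (cs ! i ! j) (g z ! i ! j)))"
        if "i < n" for i
        by (rule ln_prod) (simp, metis q that lessThan_iff order_less_irrefl)
      have "ln (r (g z)) = (\<Sum>i<n. ln (\<Prod>j<N. qb N P f (cs ! i ! j) (g z ! i ! j)))"
        unfolding r_def by (rule ln_prod) (simp, metis h1 lessThan_iff)
      also have "\<dots> = (\<Sum>i<n. \<Sum>j<N. ln (qb N P f (cs!i!j) (g z ! i ! j)))"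
        by (rule sum.cong) (auto simp: h2)
      finally show ?thesis .
    qed
    also have "\<dots> = L z"
      by (auto simp: L_def z g_def stegos_nth[OF csl ms] intro!: sum.cong)
    finally show "ln (r (g z)) = L z" .
  qed
  define Y where "Y = {ys::'x list list. length ys = n \<and> (\<forall>i<n. ys ! i \<in> tuples N)}"
  have tupe: "tuples N = {y::'x list. length y = N \<and> (\<forall>j<N. y ! j \<in> UNIV)}" by (simp add: tuples_def)
  have Yp: "finite Y \<and> (\<Sum>ys\<in>Y. r ys) = (\<Prod>i<n. \<Sum>y\<in>tuples N. \<Prod>j<N. qb N P f (cs!i!j) (y!j))"
    unfolding Y_def r_def using sum_prod_idx[of "\<lambda>_. tuples N" n "\<lambda>i y. \<Prod>j<N. qb N P f (cs!i!j) (y!j)"]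
    finite_tuples by blast
  have inner: "(\<Sum>y\<in>tuples N. \<Prod>j<N. qb N P f (cs!i!j) (y!j)) = 1" for i
    unfolding tupe using sum_prod_idx[of "\<lambda>_. UNIV" N "\<lambda>j x. qb N P f (cs!i!j) x"] qb_sum by simp
  have sumY: "(\<Sum>ys\<in>Y. r ys) = 1" using Yp inner by simp
  have gZ: "g ` Z \<subseteq> Y"
    using flen csi by (auto simp: Z_def MS_def Y_def g_def stegos_nth[OF csl] stegos_len[OF csl] tuples_def)
  have injg: "inj_on g Z" using inj by (simp add: g_def Z_def MS_def)
  have rnn: "r ys \<ge> 0" for ys unfolding r_def by (intro prod_nonneg) (simp add: qb_nonneg)
  have sumr: "(\<Sum>z\<in>Z. r (g z)) \<le> 1"
  proof -
    have "(\<Sum>z\<in>Z. r (g z)) = (\<Sum>y\<in>g ` Z. r y)" by (simp add: sum.reindex[OF injg])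
    also have "\<dots> \<le> (\<Sum>y\<in>Y. r y)" using Yp gZ rnn by (intro sum_mono2) auto
    finally show ?thesis using sumY by simp
  qed
  have "(\<Sum>z\<in>Z. (1 / W) * (ln W + L z)) \<le> (\<Sum>z\<in>Z. (r (g z) - 1 / W))"
  proof (rule sum_mono)
    fix z assume z: "z \<in> Z"
    have "ln W + L z = ln (W * r (g z))" using rpos[OF z] lnr[OF z] Wpos by (simp add: ln_mult)
    also have "\<dots> \<le> W * r (g z) - 1" using rpos[OF z] Wpos by (intro ln_le_minus_one) simp
    finally have "ln W + L z \<le> W * r (g z) - 1" .
    then have "(1 / W) * (ln W + L z) \<le> (1 / W) * (W * r (g z) - 1)" using Wpos
      by (intro mult_left_mono) auto
    also have "(1 / W) * (W * r (g z) - 1) = r (g z) - 1 / W" using Wpos by (simp add: field_simps)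
    finally show "(1 / W) * (ln W + L z) \<le> r (g z) - 1 / W" .
  qed
  also have "\<dots> = (\<Sum>z\<in>Z. r (g z)) - 1" using cardZ Wpos by (simp add: sum_subtractf)
  also have "\<dots> \<le> 0" using sumr by simp
  finally have main: "(\<Sum>z\<in>Z. (1 / W) * (ln W + L z)) \<le> 0" .
  have eq: "(\<Sum>ms\<in>MS. \<Sum>k\<in>(UNIV::'k set). prod_list (map unif ms) * unif k * (ln W + L (ms, k)))
      = (\<Sum>(ms,k)\<in>MS \<times> (UNIV::'k set). prod_list (map unif ms) * unif k * (ln W + L (ms, k)))"
    by (rule sum.cartesian_product)
  also have "\<dots> = (\<Sum>z\<in>Z. (1 / W) * (ln W + L z))"
    unfolding Z_def by (rule sum.cong) (auto simp: pm)
  finally have "(\<Sum>ms\<in>MS. \<Sum>k\<in>(UNIV::'k set). prod_list (map unif ms) * unif k * (ln W + L (ms, k))) \<le> 0"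
    using main by simp
  then show ?thesis by (simp add: MS_def W_def L_def)
qed

end


lemma prod_list_pos_mem:
  fixes xs :: "real list"
  assumes "\<forall>x\<in>set xs. 0 \<le> x" "prod_list xs > 0" "x \<in> set xs"
  shows "x > 0"
proof -
  have "prod_list xs \<noteq> 0" using assms(2) by simp
  then have "0 \<notin> set xs" by (simp only: prod_list_zero_iff) simp
  then show ?thesis using assms(1,3) by (metis less_eq_real_def)
qed

lemma swap_out:
  fixes F :: "'a \<Rightarrow> real"
  shows "(\<Sum>a\<in>A. F a * (\<Sum>b\<in>B. \<Sum>c\<in>C. G a b c * (\<Sum>i\<in>I. X i a b c)))
       = (\<Sum>i\<in>I. \<Sum>a\<in>A. F a * (\<Sum>b\<in>B. \<Sum>c\<in>C. G a b c * X i a b c))"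
proof -
  have 3: "(\<Sum>c\<in>C. G a b c * (\<Sum>i\<in>I. X i a b c)) = (\<Sum>i\<in>I. \<Sum>c\<in>C. G a b c * X i a b c)" for a b
    by (simp add: sum_distrib_left) (rule sum.swap)
  have 2: "(\<Sum>b\<in>B. \<Sum>c\<in>C. G a b c * (\<Sum>i\<in>I. X i a b c)) = (\<Sum>i\<in>I. \<Sum>b\<in>B. \<Sum>c\<in>C. G a b c * X i a b c)" for a
    by (simp add: 3) (rule sum.swap)
  have "(\<Sum>a\<in>A. F a * (\<Sum>b\<in>B. \<Sum>c\<in>C. G a b c * (\<Sum>i\<in>I. X i a b c)))
      = (\<Sum>a\<in>A. F a * (\<Sum>i\<in>I. \<Sum>b\<in>B. \<Sum>c\<in>C. G a b c * X i a b c))"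
    by (simp only: 2)
  also have "\<dots> = (\<Sum>a\<in>A. \<Sum>i\<in>I. F a * (\<Sum>b\<in>B. \<Sum>c\<in>C. G a b c * X i a b c))"
    by (rule sum.cong[OF refl], rule sum_distrib_left)
  also have "\<dots> = (\<Sum>i\<in>I. \<Sum>a\<in>A. F a * (\<Sum>b\<in>B. \<Sum>c\<in>C. G a b c * X i a b c))"
    by (rule sum.swap)
  finally show ?thesis .
qed

lemma cond_entropy_bdd:
  assumes Pnn: "\<forall>x. 0 \<le> P x"
  shows "bdd_above ((\<lambda>q. cond_entropy P q) ` admissible P d D)"
proof (rule bdd_aboveI2)
  fix q assume q: "q \<in> admissible P d D"
  have t: "- (P xt * q xt x * log 2 (q xt x)) \<le> P xt / ln 2" for xt x
  proof -
    have q0: "0 \<le> q xt x" using q by (simp add: admissible_def)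
    have "- (q xt x * ln (q xt x)) \<le> 1"
    proof (cases "q xt x = 0")
      case False
      then have qp: "q xt x > 0" using q0 by simp
      have "ln (1 / q xt x) \<le> 1 / q xt x - 1" using qp by (intro ln_le_minus_one) simp
      then have "- ln (q xt x) \<le> 1 / q xt x - 1" using qp by (simp add: ln_div)
      then have "q xt x * (- ln (q xt x)) \<le> q xt x * (1 / q xt x - 1)" using q0 by (rule mult_left_mono)
      moreover have "q xt x * (1 / q xt x - 1) = 1 - q xt x" using qp by (simp add: field_simps)
      moreover have "- (q xt x * ln (q xt x)) = q xt x * (- ln (q xt x))" by simp
      ultimately show ?thesis using q0 by linarith
    qed simp
    then have "P xt * (- (q xt x * ln (q xt x))) \<le> P xt * 1" using Pnn by (intro mult_left_mono) auto
    then show ?thesis by (simp add: log_def field_simps)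
  qed
  show "cond_entropy P q \<le> (\<Sum>xt\<in>UNIV. \<Sum>x\<in>(UNIV::'a set). P xt / ln 2)"
    unfolding cond_entropy_def sum_negf[symmetric] by (intro sum_mono) (use t in auto)
qed

lemma entropy_unif: "entropy (unif :: 'a::finite \<Rightarrow> real) UNIV = log 2 (real (card (UNIV::'a set)))"
proof -
  have c: "real (card (UNIV::'a set)) > 0" by (simp add: card_gt_0_iff)
  then show ?thesis by (simp add: entropy_def unif_def log_divide)
qed

theorem corollary1:
  fixes N :: nat
    and P :: "'x::finite \<Rightarrow> real"
    and d :: "'x \<Rightarrow> 'x \<Rightarrow> real"
    and D :: real
    and f :: "'x list \<Rightarrow> 'm::finite \<Rightarrow> 'k::finite \<Rightarrow> 'x list"
    and phi :: "'x list \<Rightarrow> 'k \<Rightarrow> 'm"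
    and \<epsilon> :: real
  assumes "N > 0"
    and "\<forall>x. 0 \<le> P x" and "(\<Sum>x\<in>UNIV. P x) = 1"
    and "\<forall>x y. 0 \<le> d x y"
    and "stego_code N P d D f phi"
    and "\<forall>\<delta>>0. err_prob N P f phi \<le> \<delta>"
    and "\<epsilon> > 0"
    and "\<exists>n. spurious_kc N P f n = 0"
  shows "real (unicity_kc N P f) \<ge>
           (entropy (unif :: 'k \<Rightarrow> real) UNIV / real N) /
           (hiding_capacity P d D - entropy (unif :: 'm \<Rightarrow> real) UNIV / real N + \<epsilon>)
         \<and> ((\<exists>n. spurious_so N P f n = 0) \<longrightarrow> unicity_so N P f \<ge> unicity_kc N P f)"
proof -
  note Npos = assms(1) and Pnn = assms(2) and Psum = assms(3)
  have flen: "\<forall>c m k. length c = N \<longrightarrow> length (f c m k) = N"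
    and dist: "avg_distortion N P d f \<le> D"
    using assms(5) by (auto simp: stego_code_def)
  note ctx = Npos Pnn Psum flen
  have errnn: "0 \<le> prodP P c * unif m * unif k * (if phi (f c m k) k \<noteq> m then 1 else 0)" for c m k
    using prodP_nonneg[OF Pnn, of c] unif_pos[of m] unif_pos[of k] by simp
  have err0: "err_prob N P f phi = 0"
  proof -
    have "0 \<le> err_prob N P f phi" unfolding err_prob_def
      by (intro sum_nonneg) (simp add: errnn)
    moreover have "err_prob N P f phi \<le> 0"
    proof (rule ccontr)
      assume "\<not> err_prob N P f phi \<le> 0"
      then have "err_prob N P f phi / 2 > 0" by simp
      then have "err_prob N P f phi \<le> err_prob N P f phi / 2" using assms(6) by blast
      then show False using \<open>\<not> err_prob N P f phi \<le> 0\<close> by simp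
    qed
    ultimately show ?thesis by simp
  qed
  have phi_ok: "phi (f c m k) k = m" if "c \<in> tuples N" "prodP P c > 0" for c m k
  proof (rule ccontr)
    assume ne: "phi (f c m k) k \<noteq> m"
    have "\<forall>c\<in>tuples N. (\<Sum>m\<in>UNIV. \<Sum>k\<in>UNIV. prodP P c * unif m * unif k * (if phi (f c m k) k \<noteq> m then 1 else 0)) = 0"
      using err0 unfolding err_prob_def
      by (subst (asm) sum_nonneg_eq_0_iff) (auto intro!: sum_nonneg simp: errnn finite_tuples)
    then have "(\<Sum>m\<in>UNIV. \<Sum>k\<in>UNIV. prodP P c * unif m * unif k * (if phi (f c m k) k \<noteq> m then 1 else 0)) = 0"
      using that by blast
    then have "\<forall>m. (\<Sum>k\<in>UNIV. prodP P c * unif m * unif k * (if phi (f c m k) k \<noteq> m then 1 else 0)) = 0"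
      by (subst (asm) sum_nonneg_eq_0_iff) (auto intro!: sum_nonneg simp: errnn)
    then have "(\<Sum>k\<in>UNIV. prodP P c * unif m * unif k * (if phi (f c m k) k \<noteq> m then 1 else 0)) = 0"
      by blast
    then have "\<forall>k. prodP P c * unif m * unif k * (if phi (f c m k) k \<noteq> m then 1 else 0) = 0"
      by (subst (asm) sum_nonneg_eq_0_iff) (auto simp: errnn)
    then have "prodP P c * unif m * unif k * (if phi (f c m k) k \<noteq> m then 1 else 0) = 0" by blast
    then show False using ne that(2) unif_pos[of m] unif_pos[of k] by simp
  qed
  define n where "n = unicity_kc N P f"
  have sp0: "spurious_kc N P f n = 0"
    unfolding n_def unicity_kc_def using assms(8) by (rule LeastI_ex)
  define CS where "CS = {cs::'x list list. length cs = n \<and> (\<forall>c\<in>set cs. c \<in> tuples N)}"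
  define MS where "MS = {ms::'m list. length ms = n}"
  have CSe: "CS = {xs. length xs = n \<and> set xs \<subseteq> tuples N}" by (auto simp: CS_def)
  have MSe: "MS = {xs. length xs = n \<and> set xs \<subseteq> UNIV}" by (simp add: MS_def)
  have finCS: "finite CS" unfolding CSe using finite_lists_length_eq[OF finite_tuples[of N], of n]
    by (simp add: conj_commute)
  have finMS: "finite MS" unfolding MSe using finite_lists_length_eq[OF finite_UNIV, of n]
    by (simp add: conj_commute)
  have pcnn: "0 \<le> prod_list (map (prodP P) cs)" for cs
    by (induction cs) (auto intro!: mult_nonneg_nonneg prodP_nonneg[OF Pnn])
  have pmpos: "0 < prod_list (map unif (ms::'m list))" for ms
    by (induction ms) (auto intro!: mult_pos_pos unif_pos)
  have kin: "k \<in> poss_keys_kc f cs (stegos f cs ms k)" if "cs \<in> CS" "ms \<in> MS" for cs ms k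
    using that by (auto simp: poss_keys_kc_def CS_def MS_def)
  have Tnn: "0 \<le> prod_list (map (prodP P) cs) * prod_list (map unif ms) * unif k *
        (real (card (poss_keys_kc f cs (stegos f cs ms k))) - 1)" if "cs \<in> CS" "ms \<in> MS" for cs ms k
  proof -
    have "card (poss_keys_kc f cs (stegos f cs ms k)) \<ge> 1"
      using kin[OF that, of k] by (metis One_nat_def Suc_leI card_gt_0_iff empty_iff finite)
    then show ?thesis using pcnn[of cs] pmpos[of ms] unif_pos[of k] by (intro mult_nonneg_nonneg) auto
  qed
  have possk: "poss_keys_kc f cs (stegos f cs ms k) = {k}"
    if cs: "cs \<in> CS" and ms: "ms \<in> MS" and pc: "prod_list (map (prodP P) cs) > 0" for cs ms k
  proof -
    have A: "\<forall>cs\<in>CS. (\<Sum>ms\<in>MS. \<Sum>k\<in>UNIV. prod_list (map (prodP P) cs) * prod_list (map unif ms) * unif k *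
        (real (card (poss_keys_kc f cs (stegos f cs ms k))) - 1)) = 0"
      using sp0 unfolding spurious_kc_def CS_def[symmetric] MS_def[symmetric]
      by (subst (asm) sum_nonneg_eq_0_iff) (auto intro!: sum_nonneg Tnn simp: finCS)
    then have "(\<Sum>ms\<in>MS. \<Sum>k\<in>UNIV. prod_list (map (prodP P) cs) * prod_list (map unif ms) * unif k *
        (real (card (poss_keys_kc f cs (stegos f cs ms k))) - 1)) = 0"
      using cs by blast
    then have "\<forall>ms\<in>MS. (\<Sum>k\<in>UNIV. prod_list (map (prodP P) cs) * prod_list (map unif ms) * unif k *
        (real (card (poss_keys_kc f cs (stegos f cs ms k))) - 1)) = 0"
      using cs by (subst (asm) sum_nonneg_eq_0_iff) (auto intro!: sum_nonneg Tnn simp: finMS)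
    then have "(\<Sum>k\<in>UNIV. prod_list (map (prodP P) cs) * prod_list (map unif ms) * unif k *
        (real (card (poss_keys_kc f cs (stegos f cs ms k))) - 1)) = 0"
      using ms by blast
    then have "\<forall>k. prod_list (map (prodP P) cs) * prod_list (map unif ms) * unif k *
        (real (card (poss_keys_kc f cs (stegos f cs ms k))) - 1) = 0"
      using ms cs by (subst (asm) sum_nonneg_eq_0_iff) (auto intro!: Tnn)
    then have "prod_list (map (prodP P) cs) * prod_list (map unif ms) * unif k *
        (real (card (poss_keys_kc f cs (stegos f cs ms k))) - 1) = 0" by blast
    then have "real (card (poss_keys_kc f cs (stegos f cs ms k))) - 1 = 0"
      using pc pmpos[of ms] unif_pos[of k] by simp
    then have "card (poss_keys_kc f cs (stegos f cs ms k)) = 1" by simp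
    then show ?thesis using kin[OF cs ms, of k] by (metis card_1_singletonE singletonD)
  qed
  have pc_each: "\<forall>c\<in>set cs. prodP P c > 0" if "prod_list (map (prodP P) cs) > 0" for cs
    using prod_list_pos_mem[of "map (prodP P) cs"] that prodP_nonneg[OF Pnn] by auto
  have injg: "inj_on (\<lambda>(ms,k). stegos f cs ms k) (MS \<times> (UNIV::'k set))"
    if cs: "cs \<in> CS" and pc: "prod_list (map (prodP P) cs) > 0" for cs
  proof (rule inj_onI)
    fix x y assume x: "x \<in> MS \<times> (UNIV::'k set)" and y: "y \<in> MS \<times> (UNIV::'k set)"
      and eq0: "(\<lambda>(ms,k). stegos f cs ms k) x = (\<lambda>(ms,k). stegos f cs ms k) y"
    obtain ms k where xe: "x = (ms, k)" by (cases x)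
    obtain ms' k' where ye: "y = (ms', k')" by (cases y)
    have ms: "ms \<in> MS" using x xe by simp
    have ms': "ms' \<in> MS" using y ye by simp
    have eq: "stegos f cs ms k = stegos f cs ms' k'" using eq0 xe ye by simp
    have csl: "length cs = n" using cs by (simp add: CS_def)
    have lms: "length ms = n" "length ms' = n" using ms ms' by (simp_all add: MS_def)
    have "k' \<in> poss_keys_kc f cs (stegos f cs ms k)"
      unfolding poss_keys_kc_def using eq lms csl by (intro CollectI exI[of _ ms'] conjI) simp_all
    then have kk: "k' = k" using possk[OF cs ms pc] by simp
    have "ms ! i = ms' ! i" if i: "i < n" for i
    proof -
      have cin: "cs ! i \<in> set cs" using i csl by simp
      have ci1: "cs ! i \<in> tuples N" using cs cin by (simp add: CS_def)
      have ci2: "prodP P (cs ! i) > 0" using pc_each[OF pc] cin by blast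
      have "f (cs ! i) (ms ! i) k = f (cs ! i) (ms' ! i) k"
      proof -
        have s1: "stegos f cs ms k ! i = f (cs ! i) (ms ! i) k" using csl lms i by (simp add: stegos_def)
        have s2: "stegos f cs ms' k ! i = f (cs ! i) (ms' ! i) k" using csl lms i by (simp add: stegos_def)
        show ?thesis using s1 s2 eq kk by simp
      qed
      moreover have "phi (f (cs ! i) (ms ! i) k) k = ms ! i" by (rule phi_ok[OF ci1 ci2])
      moreover have "phi (f (cs ! i) (ms' ! i) k) k = ms' ! i" by (rule phi_ok[OF ci1 ci2])
      ultimately show ?thesis by metis
    qed
    then have "ms = ms'" using lms by (intro nth_equalityI) simp_all
    then show "x = y" using xe ye kk by simp
  qed
  define W where "W = real (card (UNIV::'m set)) ^ n * real (card (UNIV::'k set))"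
  define g where "g = (\<lambda>(c::'x list) (m::'m) (k::'k). \<Sum>j<N. ln (qb N P f (c ! j) (f c m k ! j)))"
  define pc where "pc = (\<lambda>cs. prod_list (map (prodP P) cs))"
  define pm where "pm = (\<lambda>ms::'m list. prod_list (map unif ms))"
  have percs: "pc cs * (\<Sum>ms\<in>MS. \<Sum>k\<in>UNIV. pm ms * unif (k::'k) * (ln W + (\<Sum>i<n. g (cs!i) (ms!i) k))) \<le> 0"
    if cs: "cs \<in> CS" for cs
  proof (cases "pc cs > 0")
    case True
    have "(\<Sum>ms\<in>MS. \<Sum>k\<in>UNIV. pm ms * unif (k::'k) * (ln W + (\<Sum>i<n. g (cs!i) (ms!i) k))) \<le> 0"
      using per_cs[OF ctx, of cs n] cs pc_each[of cs] True injg[OF cs]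
      by (simp add: CS_def MS_def W_def g_def pc_def pm_def)
    then show ?thesis using True by (simp add: mult_nonneg_nonpos)
  next
    case False
    then have "pc cs = 0" using pcnn[of cs] by (simp add: pc_def)
    then show ?thesis by simp
  qed
  have tot: "(\<Sum>cs\<in>CS. pc cs * (\<Sum>ms\<in>MS. \<Sum>k\<in>UNIV. pm ms * unif (k::'k) * (ln W + (\<Sum>i<n. g (cs!i) (ms!i) k)))) \<le> 0"
    using percs by (intro sum_nonpos) auto
  have sum_pc: "(\<Sum>cs\<in>CS. pc cs) = 1"
    unfolding CSe pc_def using list_sum_one[OF finite_tuples prodP_sum[OF ctx]] by simp
  have sum_pm: "(\<Sum>ms\<in>MS. pm ms) = 1"
    unfolding MSe pm_def using list_sum_one[OF finite_UNIV unif_sum] by simp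
  have E1: "(\<Sum>cs\<in>CS. pc cs * (\<Sum>ms\<in>MS. \<Sum>k\<in>UNIV. pm ms * unif (k::'k) * ln W)) = ln W"
    by (simp add: sum_distrib_left[symmetric] sum_distrib_right[symmetric] unif_sum sum_pm sum_pc
        mult.assoc)
  have E2: "(\<Sum>cs\<in>CS. pc cs * (\<Sum>ms\<in>MS. \<Sum>k\<in>UNIV. pm ms * unif (k::'k) * (\<Sum>i<n. g (cs!i) (ms!i) k)))
      = real n * (\<Sum>c\<in>tuples N. \<Sum>m\<in>UNIV. \<Sum>k\<in>UNIV. wgt P c m k * g c m k)"
  proof -
    have "(\<Sum>cs\<in>CS. pc cs * (\<Sum>ms\<in>MS. \<Sum>k\<in>UNIV. pm ms * unif (k::'k) * (\<Sum>i<n. g (cs!i) (ms!i) k)))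
       = (\<Sum>i<n. \<Sum>cs\<in>CS. pc cs * (\<Sum>ms\<in>MS. \<Sum>k\<in>UNIV. pm ms * unif (k::'k) * g (cs!i) (ms!i) k))"
      by (rule swap_out)
    also have "\<dots> = (\<Sum>i<n. \<Sum>c\<in>tuples N. \<Sum>m\<in>UNIV. \<Sum>k\<in>UNIV. wgt P c m k * g c m k)"
    proof (rule sum.cong[OF refl])
      fix i assume i: "i \<in> {..<n}"
      have inner: "(\<Sum>ms\<in>MS. \<Sum>k\<in>UNIV. pm ms * unif (k::'k) * g c (ms!i) k)
          = (\<Sum>m\<in>UNIV. unif m * (\<Sum>k\<in>UNIV. unif k * g c m k))" for c
      proof -
        have "(\<Sum>ms\<in>MS. \<Sum>k\<in>UNIV. pm ms * unif (k::'k) * g c (ms!i) k)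
           = (\<Sum>ms\<in>MS. pm ms * (\<lambda>m. \<Sum>k\<in>UNIV. unif k * g c m k) (ms ! i))"
          by (simp add: sum_distrib_left mult.assoc)
        also have "\<dots> = (\<Sum>m\<in>UNIV. unif m * (\<Sum>k\<in>UNIV. unif k * g c m k))"
          unfolding MSe pm_def using list_marg[OF finite_UNIV unif_sum, of i n] i by simp
        finally show ?thesis .
      qed
      have "(\<Sum>cs\<in>CS. pc cs * (\<Sum>ms\<in>MS. \<Sum>k\<in>UNIV. pm ms * unif (k::'k) * g (cs!i) (ms!i) k))
          = (\<Sum>cs\<in>CS. pc cs * (\<lambda>c. \<Sum>m\<in>UNIV. unif m * (\<Sum>k\<in>UNIV. unif k * g c m k)) (cs ! i))"
        by (simp add: inner)
      also have "\<dots> = (\<Sum>c\<in>tuples N. prodP P c * (\<Sum>m\<in>UNIV. unif m * (\<Sum>k\<in>UNIV. unif k * g c m k)))"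
        unfolding CSe pc_def using list_marg[OF finite_tuples prodP_sum[OF ctx], of i n] i by simp
      also have "\<dots> = (\<Sum>c\<in>tuples N. \<Sum>m\<in>UNIV. \<Sum>k\<in>UNIV. wgt P c m k * g c m k)"
        by (simp add: wgt_def sum_distrib_left mult.assoc)
      finally show "(\<Sum>cs\<in>CS. pc cs * (\<Sum>ms\<in>MS. \<Sum>k\<in>UNIV. pm ms * unif (k::'k) * g (cs!i) (ms!i) k))
          = (\<Sum>c\<in>tuples N. \<Sum>m\<in>UNIV. \<Sum>k\<in>UNIV. wgt P c m k * g c m k)" .
    qed
    also have "\<dots> = real n * (\<Sum>c\<in>tuples N. \<Sum>m\<in>UNIV. \<Sum>k\<in>UNIV. wgt P c m k * g c m k)" by simp
    finally show ?thesis .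
  qed
  have E3: "(\<Sum>c\<in>tuples N. \<Sum>m\<in>UNIV. \<Sum>k\<in>UNIV. wgt P c m k * g c m k)
      = - real N * ln 2 * cond_entropy P (qb N P f)"
    unfolding H_expect[OF ctx, symmetric] g_def by (simp add: sum_distrib_left)
  have "(\<Sum>cs\<in>CS. pc cs * (\<Sum>ms\<in>MS. \<Sum>k\<in>UNIV. pm ms * unif (k::'k) * (ln W + (\<Sum>i<n. g (cs!i) (ms!i) k))))
     = (\<Sum>cs\<in>CS. pc cs * (\<Sum>ms\<in>MS. \<Sum>k\<in>UNIV. pm ms * unif (k::'k) * ln W))
       + (\<Sum>cs\<in>CS. pc cs * (\<Sum>ms\<in>MS. \<Sum>k\<in>UNIV. pm ms * unif (k::'k) * (\<Sum>i<n. g (cs!i) (ms!i) k)))"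
    by (simp add: distrib_left sum.distrib)
  then have lnW: "ln W \<le> real n * real N * ln 2 * cond_entropy P (qb N P f)"
    using tot E1 E2 E3 by simp
  have Wpos: "W > 0" unfolding W_def by (simp add: card_gt_0_iff)
  have logW: "log 2 W = real n * log 2 (real (card (UNIV::'m set))) + log 2 (real (card (UNIV::'k set)))"
    unfolding W_def by (simp add: log_mult_pos card_gt_0_iff log_nat_power)
  have H1: "log 2 W \<le> real n * real N * cond_entropy P (qb N P f)"
    using lnW by (simp add: log_def divide_simps ac_simps)
  have Hcap: "cond_entropy P (qb N P f) \<le> hiding_capacity P d D"
    unfolding hiding_capacity_def
    by (rule cSUP_upper[OF qb_adm[OF ctx dist] cond_entropy_bdd[OF Pnn]])
  define a where "a = log 2 (real (card (UNIV::'k set)))"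
  define b where "b = log 2 (real (card (UNIV::'m set)))"
  define C where "C = hiding_capacity P d D"
  have a0: "a \<ge> 0" unfolding a_def by (simp add: Suc_leI card_gt_0_iff)
  have key: "real n * b + a \<le> real n * real N * C"
  proof -
    have "real n * real N * cond_entropy P (qb N P f) \<le> real n * real N * C"
      using Hcap by (intro mult_left_mono) (auto simp: C_def)
    then show ?thesis using H1 logW by (simp add: a_def b_def)
  qed
  have part1: "(a / real N) / (C - b / real N + \<epsilon>) \<le> real n"
  proof (cases "C - b / real N + \<epsilon> > 0")
    case True
    have "a / real N \<le> real n * (C - b / real N)"
      using key Npos by (simp add: field_simps)
    also have "\<dots> \<le> real n * (C - b / real N + \<epsilon>)" using assms(7) by (intro mult_left_mono) auto
    finally have "a / real N \<le> real n * (C - b / real N + \<epsilon>)" .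
    then show ?thesis using True by (subst pos_divide_le_eq) auto
  next
    case False
    then have "(a / real N) / (C - b / real N + \<epsilon>) \<le> 0"
      using a0 Npos by (intro divide_nonneg_nonpos) auto
    then show ?thesis by simp
  qed
  have part2: "unicity_so N P f \<ge> unicity_kc N P f" if ex: "\<exists>n. spurious_so N P f n = 0"
  proof -
    define n1 where "n1 = unicity_so N P f"
    have so0: "spurious_so N P f n1 = 0" unfolding n1_def unicity_so_def using ex by (rule LeastI_ex)
    define CS1 where "CS1 = {cs::'x list list. length cs = n1 \<and> (\<forall>c\<in>set cs. c \<in> tuples N)}"
    define MS1 where "MS1 = {ms::'m list. length ms = n1}"
    have cmp: "0 \<le> prod_list (map (prodP P) cs) * prod_list (map unif ms) * unif k *
               (real (card (poss_keys_kc f cs (stegos f cs ms k))) - 1) \<and>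
             prod_list (map (prodP P) cs) * prod_list (map unif ms) * unif k *
               (real (card (poss_keys_kc f cs (stegos f cs ms k))) - 1) \<le>
             prod_list (map (prodP P) cs) * prod_list (map unif ms) * unif k *
               (real (card (poss_keys_so N P f (stegos f cs ms k))) - 1)"
      if cs: "cs \<in> CS1" and ms: "ms \<in> MS1" for cs ms k
    proof (cases "prod_list (map (prodP P) cs) > 0")
      case True
      have k1: "k \<in> poss_keys_kc f cs (stegos f cs ms k)"
        using cs ms by (auto simp: poss_keys_kc_def CS1_def MS1_def)
      have c1: "card (poss_keys_kc f cs (stegos f cs ms k)) \<ge> 1"
        using k1 by (metis One_nat_def Suc_leI card_gt_0_iff empty_iff finite)
      have sub: "poss_keys_kc f cs (stegos f cs ms k) \<subseteq> poss_keys_so N P f (stegos f cs ms k)"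
      proof
        fix k' assume "k' \<in> poss_keys_kc f cs (stegos f cs ms k)"
        then obtain ms' where "length ms' = length cs" "stegos f cs ms' k' = stegos f cs ms k"
          by (auto simp: poss_keys_kc_def)
        then show "k' \<in> poss_keys_so N P f (stegos f cs ms k)"
          unfolding poss_keys_so_def using cs ms pc_each[OF True]
          by (auto simp: CS1_def MS1_def stegos_def tuples_def intro!: exI[of _ cs] exI[of _ ms'])
      qed
      have "card (poss_keys_kc f cs (stegos f cs ms k)) \<le> card (poss_keys_so N P f (stegos f cs ms k))"
        using sub by (intro card_mono) auto
      then show ?thesis using c1 pcnn[of cs] pmpos[of ms] unif_pos[of k]
        by (auto intro!: mult_nonneg_nonneg mult_left_mono)
    next
      case False
      then have "prod_list (map (prodP P) cs) = 0" using pcnn[of cs] by simp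
      then show ?thesis by simp
    qed
    have "spurious_kc N P f n1 \<le> spurious_so N P f n1"
      unfolding spurious_kc_def spurious_so_def CS1_def[symmetric] MS1_def[symmetric]
      using cmp by (intro sum_mono) auto
    moreover have "0 \<le> spurious_kc N P f n1"
      unfolding spurious_kc_def CS1_def[symmetric] MS1_def[symmetric]
      using cmp by (intro sum_nonneg) auto
    ultimately have "spurious_kc N P f n1 = 0" using so0 by simp
    then show ?thesis unfolding n1_def[symmetric] unicity_kc_def by (rule Least_le)
  qed
  show ?thesis using part1 part2
    by (simp add: entropy_unif a_def b_def C_def n_def)
qed

end
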